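(* Let $X$ be a simple chain. (1) If $X$ is rigid, then the group $(\mathrm{Aut}(X),\tau_p)$, and hence also $(\mathrm{Aut}(X),\tau_\partial)$, is not Roelcke precompact. (2) If $X$ is ultrahomogeneous, then the group $(\mathrm{Aut}(X),\tau_\partial)$, and hence also $(\mathrm{Aut}(X),\tau_p)$, is Roelcke precompact.
   Context: A chain is a linearly ordered set; $\mathrm{Aut}(X)$ is its group of order-preserving bijections. $X$ is homogeneous if $\mathrm{Aut}(X)$ acts transitively. An interval is a convex subset. An interval $J$ is regular if for all $x,y\in J$ and $g\in\mathrm{Aut}(X)$, $g(x)\in J$ implies $g(y)\in J$. A homogeneous chain is simple if it has no proper regular intervals (i.e. the only nonempty regular intervals are singletons and $X$). A homogeneous chain is rigid if for any $x,y\in X$ there is exactly one $g\in\mathrm{Aut}(X)$ with $g(x)=y$. $X$ is ultrahomogeneous if for every $n$ and all $x_1<\dots<x_n$, $y_1<\dots<y_n$ in $X$ there is $g\in\mathrm{Aut}(X)$ with $g(x_k)=y_k$. $\tau_p$ is the topology of pointwise convergence on $\mathrm{Aut}(X)$ where $X$ carries the linear order topology; $\tau_\partial$ is the permutation topology, whose identity neighbourhood base consists of pointwise stabilizers of finite subsets of $X$. A topological group is Roelcke precompact if its Roelcke uniformity (the greatest lower bound of the left and right uniformities) is totally bounded. *)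

theory Defs
  imports "HOL-Analysis.Analysis"
begin

text \<open>A chain is represented by a type of class linorder_topology: a linear order
  carrying its order (interval) topology. The chain X is the whole type.\<close>

definition Aut :: "('a::linorder \<Rightarrow> 'a) set" where
  "Aut = {g. bij g \<and> mono g}"

definition homogeneous_chain :: "'a::linorder itself \<Rightarrow> bool" where
  "homogeneous_chain _ \<longleftrightarrow> (\<forall>x y::'a. \<exists>g\<in>Aut. g x = y)"

definition chain_interval :: "'a::linorder set \<Rightarrow> bool" where
  "chain_interval J \<longleftrightarrow> (\<forall>a b c. a \<in> J \<and> c \<in> J \<and> a \<le> b \<and> b \<le> c \<longrightarrow> b \<in> J)"

definition regular_interval :: "'a::linorder set \<Rightarrow> bool" where
  "regular_interval J \<longleftrightarrow> chain_interval J \<and>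
     (\<forall>x\<in>J. \<forall>y\<in>J. \<forall>g\<in>Aut. g x \<in> J \<longrightarrow> g y \<in> J)"

definition simple_chain :: "'a::linorder itself \<Rightarrow> bool" where
  "simple_chain T \<longleftrightarrow> homogeneous_chain T \<and>
     (\<forall>J::'a set. J \<noteq> {} \<and> regular_interval J \<longrightarrow> (\<exists>x. J = {x}) \<or> J = UNIV)"

definition rigid_chain :: "'a::linorder itself \<Rightarrow> bool" where
  "rigid_chain T \<longleftrightarrow> homogeneous_chain T \<and> (\<forall>x y::'a. \<exists>!g. g \<in> Aut \<and> g x = y)"

definition ultrahomogeneous_chain :: "'a::linorder itself \<Rightarrow> bool" where
  "ultrahomogeneous_chain _ \<longleftrightarrow>
     (\<forall>xs ys :: 'a list. sorted_wrt (<) xs \<and> sorted_wrt (<) ys \<and> length xs = length ys \<longrightarrow>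
        (\<exists>g\<in>Aut. \<forall>k < length xs. g (xs ! k) = ys ! k))"

definition tau_p :: "('a::linorder_topology \<Rightarrow> 'a) topology" where
  "tau_p = subtopology (product_topology (\<lambda>_. euclidean) UNIV) Aut"

definition tau_partial :: "('a::linorder \<Rightarrow> 'a) topology" where
  "tau_partial = subtopology (product_topology (\<lambda>_. discrete_topology UNIV) UNIV) Aut"

definition roelcke_entourage :: "('a \<Rightarrow> 'a) set \<Rightarrow> ('a \<Rightarrow> 'a) topology \<Rightarrow> (('a \<Rightarrow> 'a) \<times> ('a \<Rightarrow> 'a)) set \<Rightarrow> bool" where
  "roelcke_entourage G T E \<longleftrightarrow> E \<subseteq> G \<times> G \<and>
     (\<exists>U. openin T U \<and> id \<in> U \<and>
        {(x, y). x \<in> G \<and> y \<in> G \<and> (\<exists>u\<in>U. \<exists>v\<in>U. y = u \<circ> x \<circ> v)} \<subseteq> E)"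

definition roelcke_precompact :: "('a \<Rightarrow> 'a) set \<Rightarrow> ('a \<Rightarrow> 'a) topology \<Rightarrow> bool" where
  "roelcke_precompact G T \<longleftrightarrow>
     (\<forall>E. roelcke_entourage G T E \<longrightarrow>
        (\<exists>F. finite F \<and> F \<subseteq> G \<and> G \<subseteq> (\<Union>f\<in>F. {y. (f, y) \<in> E})))"

end

theory Submission
  imports Defs
begin


lemma Aut_iff: "g \<in> Aut \<longleftrightarrow> bij g \<and> mono g"
  by (simp add: Aut_def)

lemma Aut_less:
  fixes g :: "'a::linorder \<Rightarrow> 'a"
  assumes "g \<in> Aut" "x < y" shows "g x < g y"
proof -
  have "g x \<le> g y" using assms by (auto simp: Aut_iff mono_def)
  moreover have "g x \<noteq> g y" using assms by (auto simp: Aut_iff bij_def inj_def)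
  ultimately show ?thesis by simp
qed

lemma Aut_less_iff:
  fixes g :: "'a::linorder \<Rightarrow> 'a"
  assumes "g \<in> Aut" shows "g x < g y \<longleftrightarrow> x < y"
  by (metis Aut_less assms not_less_iff_gr_or_eq)

lemma Aut_le_iff:
  fixes g :: "'a::linorder \<Rightarrow> 'a"
  assumes "g \<in> Aut" shows "g x \<le> g y \<longleftrightarrow> x \<le> y"
  by (meson Aut_less_iff assms not_less)

lemma Aut_inv_f [simp]: "g \<in> Aut \<Longrightarrow> inv g (g x) = x"
  by (simp add: Aut_iff bij_is_inj)

lemma Aut_f_inv [simp]: "g \<in> Aut \<Longrightarrow> g (inv g x) = x"
  by (simp add: Aut_iff bij_is_surj surj_f_inv_f)

lemma Aut_inv:
  fixes g :: "'a::linorder \<Rightarrow> 'a"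
  assumes "g \<in> Aut" shows "inv g \<in> Aut"
proof -
  have "bij (inv g)" using assms by (simp add: Aut_iff bij_imp_bij_inv)
  moreover have "mono (inv g)"
  proof (rule monoI)
    fix x y :: 'a assume "x \<le> y"
    then show "inv g x \<le> inv g y"
      using Aut_le_iff[OF assms, of "inv g x" "inv g y"] assms by simp
  qed
  ultimately show ?thesis by (simp add: Aut_iff)
qed

lemma Aut_comp:
  assumes "f \<in> Aut" "g \<in> Aut" shows "f \<circ> g \<in> Aut"
  using assms by (auto simp: Aut_iff bij_comp mono_def)

lemma Aut_id: "id \<in> Aut"
  by (simp add: Aut_iff mono_def)

lemma inv_inv_Aut: "g \<in> Aut \<Longrightarrow> inv (inv g) = g"
  by (simp add: Aut_iff inv_inv_eq)

lemma open_p_imp_partial: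
  assumes "openin (tau_p :: ('a::linorder_topology \<Rightarrow> 'a) topology) U"
  shows "openin tau_partial U"
proof -
  obtain V where V: "openin (product_topology (\<lambda>_. euclidean) UNIV) V" "U = V \<inter> Aut"
    using assms by (auto simp: tau_p_def openin_subtopology)
  have "continuous_map (product_topology (\<lambda>_. discrete_topology UNIV) UNIV)
          (product_topology (\<lambda>_. (euclidean::'a topology)) UNIV) (id :: ('a \<Rightarrow> 'a) \<Rightarrow> _)"
    unfolding continuous_map_componentwise
  proof (intro conjI ballI)
    show "id ` topspace (product_topology (\<lambda>_. discrete_topology UNIV) UNIV) \<subseteq> extensional UNIV"
      by simp
    fix k :: 'a
    have cm: "continuous_map (product_topology (\<lambda>_. discrete_topology (UNIV::'a set)) UNIV) (discrete_topology UNIV) (\<lambda>x. x k)"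
      by (rule continuous_map_product_projection) simp
    then show "continuous_map (product_topology (\<lambda>_. discrete_topology UNIV) UNIV) euclidean (\<lambda>x::'a\<Rightarrow>'a. id x k)"
      using continuous_map_compose[OF cm, of euclidean id] by (simp add: o_def)
  qed
  then have "openin (product_topology (\<lambda>_. discrete_topology UNIV) UNIV) V"
    using openin_continuous_map_preimage[OF _ V(1)] by fastforce
  then show ?thesis using V(2) by (auto simp: tau_partial_def openin_subtopology)
qed

lemma precompact_partial_imp_p:
  assumes "roelcke_precompact (Aut :: ('a::linorder_topology \<Rightarrow> 'a) set) tau_partial"
  shows "roelcke_precompact (Aut :: ('a \<Rightarrow> 'a) set) tau_p"
  using assms open_p_imp_partial unfolding roelcke_precompact_def roelcke_entourage_def
  by meson




definition orb :: "('a \<Rightarrow> 'a) \<Rightarrow> 'a \<Rightarrow> 'a set" where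
  "orb k p = range (\<lambda>n. (k ^^ n) p) \<union> range (\<lambda>n. (inv k ^^ n) p)"

definition hull_orb :: "('a::linorder \<Rightarrow> 'a) \<Rightarrow> 'a \<Rightarrow> 'a set" where
  "hull_orb k p = {y. \<exists>a\<in>orb k p. \<exists>b\<in>orb k p. a \<le> y \<and> y \<le> b}"

lemma orb_step:
  fixes k :: "'a::linorder \<Rightarrow> 'a"
  assumes "k \<in> Aut" "a \<in> orb k p" shows "k a \<in> orb k p"
proof -
  from assms(2) consider n where "a = (k ^^ n) p" | n where "a = (inv k ^^ n) p"
    unfolding orb_def by blast
  then show ?thesis
  proof cases
    case (1 n)
    then have "k a = (k ^^ Suc n) p" by simp
    then show ?thesis unfolding orb_def by blast
  next
    case (2 n)
    show ?thesis
    proof (cases n)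
      case 0
      then have "k a = (k ^^ 1) p" using 2 by simp
      then show ?thesis unfolding orb_def by blast
    next
      case (Suc m)
      then have "k a = (inv k ^^ m) p" using 2 assms(1) by simp
      then show ?thesis unfolding orb_def by blast
    qed
  qed
qed

lemma orb_inv:
  fixes k :: "'a::linorder \<Rightarrow> 'a"
  assumes "k \<in> Aut" shows "orb (inv k) p = orb k p"
  unfolding orb_def using inv_inv_Aut[OF assms] by auto

lemma hull_orb_step:
  fixes k :: "'a::linorder \<Rightarrow> 'a"
  assumes "k \<in> Aut" "y \<in> hull_orb k p" shows "k y \<in> hull_orb k p"
proof -
  from assms(2) obtain a b where ab: "a \<in> orb k p" "b \<in> orb k p" "a \<le> y" "y \<le> b"
    by (auto simp: hull_orb_def)
  then have "k a \<le> k y" "k y \<le> k b" using Aut_le_iff[OF assms(1)] by auto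
  then show ?thesis unfolding hull_orb_def using orb_step[OF assms(1)] ab by blast
qed

lemma hull_orb_step_inv:
  fixes k :: "'a::linorder \<Rightarrow> 'a"
  assumes "k \<in> Aut" "y \<in> hull_orb k p" shows "inv k y \<in> hull_orb k p"
proof -
  have "hull_orb (inv k) p = hull_orb k p" unfolding hull_orb_def using orb_inv[OF assms(1)] by simp
  then show ?thesis using hull_orb_step[OF Aut_inv[OF assms(1)]] assms(2) by metis
qed

lemma hull_orb_conv:
  fixes k :: "'a::linorder \<Rightarrow> 'a"
  assumes "a \<in> hull_orb k p" "c \<in> hull_orb k p" "a \<le> b" "b \<le> c"
  shows "b \<in> hull_orb k p"
proof -
  from assms(1) obtain a' where "a' \<in> orb k p" "a' \<le> a" by (auto simp: hull_orb_def)
  moreover from assms(2) obtain c' where "c' \<in> orb k p" "c \<le> c'" by (auto simp: hull_orb_def)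
  ultimately show ?thesis unfolding hull_orb_def using assms(3,4) by (blast intro: order_trans)
qed

lemma pow_ge:
  fixes k :: "'a::linorder \<Rightarrow> 'a"
  assumes "k \<in> Aut" "q \<le> k q" shows "q \<le> (k ^^ n) q"
proof (induction n)
  case 0 then show ?case by simp
next
  case (Suc n)
  then have "k q \<le> k ((k ^^ n) q)" using assms(1) by (simp add: Aut_le_iff)
  then show ?case using assms(2) by simp
qed

lemma pow_le:
  fixes k :: "'a::linorder \<Rightarrow> 'a"
  assumes "k \<in> Aut" "k q \<le> q" shows "(k ^^ n) q \<le> q"
proof (induction n)
  case 0 then show ?case by simp
next
  case (Suc n)
  then have "k ((k ^^ n) q) \<le> k q" using assms(1) by (simp add: Aut_le_iff)
  then show ?case using assms(2) by simp
qed

lemma pow_inv_cancel: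
  fixes k :: "'a::linorder \<Rightarrow> 'a"
  assumes "k \<in> Aut" shows "(k ^^ n) ((inv k ^^ n) p) = p"
proof (induction n)
  case 0 then show ?case by simp
next
  case (Suc n)
  have "(k ^^ Suc n) ((inv k ^^ Suc n) p) = (k ^^ n) (k (inv k ((inv k ^^ n) p)))"
    by (simp add: funpow_swap1)
  also have "\<dots> = p" using Suc assms by simp
  finally show ?case .
qed

lemma pow_Aut: "k \<in> Aut \<Longrightarrow> (k ^^ n) \<in> Aut"
  by (induction n) (auto simp: Aut_id Aut_comp)

lemma rigid_no_fix:
  fixes k :: "'a::linorder \<Rightarrow> 'a"
  assumes "rigid_chain TYPE('a)" "k \<in> Aut" "k z = z" shows "k = id"
proof -
  from assms(1) have "\<exists>!g. g \<in> Aut \<and> g z = z" by (simp add: rigid_chain_def)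
  then show ?thesis using assms(2,3) Aut_id by (metis id_apply)
qed

lemma rigid_L:
  fixes k :: "'a::linorder \<Rightarrow> 'a"
  assumes rig: "rigid_chain TYPE('a)" and k: "k \<in> Aut" and pq: "p < q"
    and kp: "k p < p" and kq: "q < k q"
  shows False
proof -
  define C where "C = hull_orb k p"
  have pC: "p \<in> C" unfolding C_def hull_orb_def orb_def
    by (rule CollectI, rule bexI[where x=p], rule bexI[where x=p]) (auto intro: range_eqI[where x=0])
  have qC: "q \<notin> C"
  proof
    assume "q \<in> C"
    then obtain b where b: "b \<in> orb k p" "q \<le> b" unfolding C_def hull_orb_def by blast
    from b(1) consider n where "b = (k ^^ n) p" | n where "b = (inv k ^^ n) p"
      unfolding orb_def by blast
    then show False
    proof cases
      case (1 n)
      then have "b \<le> p" using pow_le[OF k] kp by simp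
      then show False using b(2) pq by simp
    next
      case (2 n)
      have "(k ^^ n) q \<le> (k ^^ n) b" using b(2) pow_Aut[OF k] by (simp add: Aut_le_iff)
      also have "\<dots> = p" using 2 pow_inv_cancel[OF k] by simp
      finally have "(k ^^ n) q \<le> p" .
      moreover have "q \<le> (k ^^ n) q" using pow_ge[OF k] kq by simp
      ultimately show False using pq by simp
    qed
  qed
  define k' where "k' = (\<lambda>y. if y \<in> C then k y else y)"
  define k'' where "k'' = (\<lambda>y. if y \<in> C then inv k y else y)"
  have kC: "y \<in> C \<Longrightarrow> k y \<in> C" for y unfolding C_def using hull_orb_step[OF k] by blast
  have kiC: "y \<in> C \<Longrightarrow> inv k y \<in> C" for y unfolding C_def using hull_orb_step_inv[OF k] by blast
  have conv: "a \<in> C \<Longrightarrow> c \<in> C \<Longrightarrow> a \<le> b \<Longrightarrow> b \<le> c \<Longrightarrow> b \<in> C" for a b c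
    unfolding C_def using hull_orb_conv by blast
  have c1: "k' \<circ> k'' = id" unfolding k'_def k''_def
    by (rule ext) (auto simp: kiC k)
  have c2: "k'' \<circ> k' = id" unfolding k'_def k''_def
    by (rule ext) (auto simp: kC k)
  have "bij k'" using c1 c2 o_bij by blast
  moreover have "mono k'"
  proof (rule monoI)
    fix x y :: 'a assume xy: "x \<le> y"
    show "k' x \<le> k' y"
    proof (cases "x \<in> C"; cases "y \<in> C")
      assume "x \<in> C" "y \<in> C" then show ?thesis using xy k by (simp add: k'_def Aut_le_iff)
    next
      assume "x \<in> C" "y \<notin> C"
      then show ?thesis using conv[where a=x and b=y and c="k x"] kC xy by (force simp: k'_def)
    next
      assume "x \<notin> C" "y \<in> C"
      then show ?thesis using conv[where a="k y" and b=x and c=y] kC xy by (force simp: k'_def)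
    next
      assume "x \<notin> C" "y \<notin> C" then show ?thesis using xy by (simp add: k'_def)
    qed
  qed
  ultimately have "k' \<in> Aut" by (simp add: Aut_iff)
  moreover have "k' q = q" using qC by (simp add: k'_def)
  ultimately have "k' = id" using rigid_no_fix[OF rig] by blast
  moreover have "k' p = k p" using pC by (simp add: k'_def)
  ultimately show False using kp by simp
qed

lemma rigid_sign:
  fixes k :: "'a::linorder \<Rightarrow> 'a"
  assumes rig: "rigid_chain TYPE('a)" and k: "k \<in> Aut" and kp: "k p < p"
  shows "k z < z"
proof (rule ccontr)
  assume "\<not> k z < z"
  then have "z \<le> k z" by simp
  moreover have "k z \<noteq> z"
  proof
    assume "k z = z" then have "k = id" using rigid_no_fix[OF rig k] by blast
    then show False using kp by simp
  qed
  ultimately have kz: "z < k z" by simp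
  show False
  proof (cases "p < z")
    case True then show False using rigid_L[OF rig k True kp kz] by blast
  next
    case False
    have "z \<noteq> p" using kp kz by auto
    then have zp: "z < p" using False by simp
    have ik: "inv k \<in> Aut" by (rule Aut_inv[OF k])
    have "k (inv k z) < k z" using kz k by simp
    then have "inv k z < z" using Aut_less_iff[OF k] by blast
    moreover have "k p < k (inv k p)" using kp k by simp
    then have "p < inv k p" using Aut_less_iff[OF k] by blast
    ultimately show False using rigid_L[OF rig ik zp] by blast
  qed
qed




lemma rigid_not_precompact:
  assumes rig: "rigid_chain TYPE('a::linorder_topology)" and two: "\<exists>x y::'a. x \<noteq> y"
  shows "\<not> roelcke_precompact (Aut :: ('a \<Rightarrow> 'a) set) tau_p"
proof
  assume pc: "roelcke_precompact (Aut :: ('a \<Rightarrow> 'a) set) tau_p"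
  have hom: "\<And>x y::'a. \<exists>g\<in>Aut. g x = y"
    using rig by (simp add: rigid_chain_def homogeneous_chain_def)
  obtain lo hi :: 'a where lohi: "lo < hi" using two by (metis linorder_neqE)
  obtain h where h: "h \<in> Aut" "h lo = hi" using hom by blast
  have ih: "inv h \<in> Aut" using Aut_inv[OF h(1)] .
  have hup: "z < h z" for z
  proof -
    have "inv h hi = lo" using Aut_inv_f[OF h(1), of lo] h(2) by simp
    then have "inv h hi < hi" using lohi by simp
    then have "inv h (h z) < h z" using rigid_sign[OF rig ih] by blast
    then show ?thesis using h(1) by simp
  qed
  define x0 where "x0 = lo"
  define U where "U = {u \<in> Aut. u x0 < h x0}"
  have "openin (product_topology (\<lambda>_. (euclidean::'a topology)) UNIV) {f. f x0 \<in> {..<h x0}}"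
    using openin_continuous_map_preimage[OF continuous_map_product_projection[of x0 UNIV "\<lambda>_. (euclidean::'a topology)"], of "{..<h x0}"]
    by simp
  then have Uo: "openin tau_p U"
    unfolding tau_p_def openin_subtopology U_def by blast
  have idU: "id \<in> U" unfolding U_def using Aut_id hup by simp
  define E where "E = {(x, y). x \<in> (Aut::('a\<Rightarrow>'a) set) \<and> y \<in> Aut \<and> (\<exists>u\<in>U. \<exists>v\<in>U. y = u \<circ> x \<circ> v)}"
  have ent: "roelcke_entourage Aut tau_p E"
    unfolding roelcke_entourage_def
  proof (intro conjI exI[of _ U])
    show "E \<subseteq> Aut \<times> Aut" unfolding E_def by blast
    show "openin tau_p U" by (rule Uo)
    show "id \<in> U" by (rule idU)
    show "{(x, y). x \<in> Aut \<and> y \<in> Aut \<and> (\<exists>u\<in>U. \<exists>v\<in>U. y = u \<circ> x \<circ> v)} \<subseteq> E"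
      unfolding E_def by (rule subset_refl)
  qed
  obtain F where F: "finite F" "F \<subseteq> Aut" "Aut \<subseteq> (\<Union>f\<in>F. {y. (f, y) \<in> E})"
    using pc[unfolded roelcke_precompact_def, rule_format, OF ent] by (elim exE conjE) (rule that)
  define m where "m = Max (insert x0 ((\<lambda>f. h (f (h x0))) ` F))"
  have mge: "f \<in> F \<Longrightarrow> h (f (h x0)) \<le> m" for f
    unfolding m_def using F(1) by (simp add: Max_ge_iff)
  obtain g where g: "g \<in> Aut" "g x0 = h m" using hom by blast
  from F(3) g(1) obtain f where "f \<in> F" "(f, g) \<in> E" by blast
  then obtain u v where fuv: "f \<in> F" "u \<in> U" "v \<in> U" "g = u \<circ> f \<circ> v"
    unfolding E_def by auto
  have f: "f \<in> Aut" using F(2) fuv(1) by blast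
  have u: "u \<in> Aut" "u x0 < h x0" and v: "v \<in> Aut" "v x0 < h x0" using fuv unfolding U_def by auto
  have k: "inv h \<circ> u \<in> Aut" using Aut_comp[OF ih u(1)] .
  have "(inv h \<circ> u) x0 < x0"
  proof -
    have "h (inv h (u x0)) < h x0" using u(2) h(1) by simp
    then show ?thesis using Aut_less_iff[OF h(1)] by simp
  qed
  then have "(inv h \<circ> u) w < w" for w using rigid_sign[OF rig k] by blast
  then have ulth: "u w < h w" for w
  proof -
    have "inv h (u w) < w" using \<open>\<And>w. (inv h \<circ> u) w < w\<close> by simp
    then have "h (inv h (u w)) < h w" using Aut_less_iff[OF h(1)] by blast
    then show ?thesis using h(1) by simp
  qed
  have "g x0 = u (f (v x0))" using fuv(4) by simp
  also have "\<dots> \<le> u (f (h x0))"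
  proof -
    have "f (v x0) \<le> f (h x0)" using v(2) Aut_le_iff[OF f] by simp
    then show ?thesis using Aut_le_iff[OF u(1)] by simp
  qed
  also have "\<dots> < h (f (h x0))" by (rule ulth)
  also have "\<dots> \<le> m" by (rule mge[OF fuv(1)])
  also have "\<dots> < h m" by (rule hup)
  finally show False using g(2) by simp
qed




lemma UH_ext:
  fixes h :: "'a::linorder \<Rightarrow> 'a"
  assumes uh: "ultrahomogeneous_chain TYPE('a)" and S: "finite S"
    and hm: "\<forall>x\<in>S. \<forall>y\<in>S. x < y \<longrightarrow> h x < h y"
  shows "\<exists>g\<in>Aut. \<forall>x\<in>S. g x = h x"
proof -
  define xs where "xs = sorted_list_of_set S"
  have sx: "sorted_wrt (<) xs" unfolding xs_def by simp
  have setx: "set xs = S" unfolding xs_def using S by simp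
  have sy: "sorted_wrt (<) (map h xs)"
    unfolding sorted_wrt_map using sx setx hm sorted_wrt_mono_rel[of xs "(<)" "\<lambda>x y. h x < h y"]
    by auto
  obtain g where g: "g \<in> Aut" "\<forall>k < length xs. g (xs ! k) = map h xs ! k"
    using uh sx sy unfolding ultrahomogeneous_chain_def by fastforce
  have "\<forall>x\<in>S. g x = h x"
  proof
    fix x assume "x \<in> S"
    then obtain k where "k < length xs" "x = xs ! k" using setx by (metis in_set_conv_nth)
    then show "g x = h x" using g(2) by simp
  qed
  then show ?thesis using g(1) by blast
qed




lemma uh_precompact:
  assumes uh: "ultrahomogeneous_chain TYPE('a::linorder_topology)"
  shows "roelcke_precompact (Aut :: ('a \<Rightarrow> 'a) set) tau_partial"
  unfolding roelcke_precompact_def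
proof (intro allI impI)
  fix E assume "roelcke_entourage (Aut :: ('a \<Rightarrow> 'a) set) tau_partial E"
  then obtain U where Uo: "openin tau_partial U" and idU: "id \<in> U"
    and UE: "{(x, y). x \<in> Aut \<and> y \<in> Aut \<and> (\<exists>u\<in>U. \<exists>v\<in>U. y = u \<circ> x \<circ> v)} \<subseteq> E"
    unfolding roelcke_entourage_def by blast
  obtain V where V: "openin (product_topology (\<lambda>_. discrete_topology (UNIV::'a set)) UNIV) V"
    "U = V \<inter> Aut"
    using Uo unfolding tau_partial_def openin_subtopology by blast
  have "id \<in> V" using idU V(2) by blast
  then obtain W where W: "finite {i \<in> UNIV. W i \<noteq> topspace (discrete_topology (UNIV::'a set))}"
    "id \<in> Pi\<^sub>E UNIV W" "Pi\<^sub>E UNIV W \<subseteq> V"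
    using V(1) unfolding openin_product_topology_alt by blast
  define A where "A = {i. W i \<noteq> UNIV}"
  have finA: "finite A" using W(1) unfolding A_def by simp
  have stab: "g \<in> U" if g: "g \<in> Aut" "\<forall>a\<in>A. g a = a" for g
  proof -
    have "g \<in> Pi\<^sub>E UNIV W"
    proof (unfold PiE_iff, intro conjI ballI)
      fix i :: 'a
      show "g i \<in> W i"
      proof (cases "i \<in> A")
        case True
        then have "g i = i" using g by blast
        moreover have "id i \<in> W i" using W(2) by (simp add: PiE_iff)
        ultimately show ?thesis by simp
      next
        case False then show ?thesis unfolding A_def by simp
      qed
    qed simp
    then show ?thesis using W(3) V(2) g(1) by blast
  qed
  define pat where "pat = (\<lambda>g::'a\<Rightarrow>'a. ({(a, b). a \<in> A \<and> b \<in> A \<and> a < g b}, {(a, b). a \<in> A \<and> b \<in> A \<and> a = g b}))"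
  have "pat ` Aut \<subseteq> Pow (A \<times> A) \<times> Pow (A \<times> A)" unfolding pat_def by auto
  then have finP: "finite (pat ` Aut)" using finA by (meson finite_Pow_iff finite_SigmaI finite_subset)
  define ch where "ch = (\<lambda>P. SOME f. f \<in> Aut \<and> pat f = P)"
  have ch: "g \<in> Aut \<Longrightarrow> ch (pat g) \<in> Aut \<and> pat (ch (pat g)) = pat g" for g
    unfolding ch_def using someI[of "\<lambda>f. f \<in> Aut \<and> pat f = pat g" g] by simp
  define F where "F = ch ` (pat ` Aut)"
  have "finite F" unfolding F_def using finP by simp
  moreover have "F \<subseteq> Aut" unfolding F_def using ch by blast
  moreover have "Aut \<subseteq> (\<Union>f\<in>F. {y. (f, y) \<in> E})"
  proof
    fix g :: "'a \<Rightarrow> 'a" assume g: "g \<in> Aut"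
    define f where "f = ch (pat g)"
    have fF: "f \<in> F" unfolding F_def f_def using g by blast
    have f: "f \<in> Aut" and pf: "pat f = pat g" using ch[OF g] unfolding f_def by auto
    have lt: "a < g b \<longleftrightarrow> a < f b" if "a \<in> A" "b \<in> A" for a b
    proof -
      have "fst (pat f) = fst (pat g)" using pf by simp
      then show ?thesis using that unfolding pat_def by (auto dest: equalityD1 equalityD2)
    qed
    have eq: "a = g b \<longleftrightarrow> a = f b" if "a \<in> A" "b \<in> A" for a b
    proof -
      have "snd (pat f) = snd (pat g)" using pf by simp
      then show ?thesis using that unfolding pat_def by (auto dest: equalityD1 equalityD2)
    qed
    define hm where "hm = (\<lambda>y. if y \<in> A then y else f (inv g y))"
    define S where "S = A \<union> g ` A"
    have hmA: "hm a = a" if "a \<in> A" for a using that by (simp add: hm_def)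
    have hmg: "hm (g a) = f a" if "a \<in> A" for a
    proof (cases "g a \<in> A")
      case True
      then have "g a = f a" using eq[OF True that] by simp
      then show ?thesis using True by (simp add: hm_def)
    next
      case False then show ?thesis using g by (simp add: hm_def)
    qed
    have Scases: "y \<in> A \<or> (\<exists>a\<in>A. y = g a)" if "y \<in> S" for y using that unfolding S_def by blast
    have hmono: "\<forall>x\<in>S. \<forall>y\<in>S. x < y \<longrightarrow> hm x < hm y"
    proof (intro ballI impI)
      fix x y assume xS: "x \<in> S" and yS: "y \<in> S" and xy: "x < y"
      show "hm x < hm y"
      proof (cases "x \<in> A")
        case xA: True
        show ?thesis
        proof (cases "y \<in> A")
          case True then show ?thesis using xA xy hmA by simp
        next
          case False
          then obtain b where b: "b \<in> A" "y = g b" using Scases[OF yS] by blast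
          then show ?thesis using xA xy hmA hmg lt by simp
        qed
      next
        case False
        then obtain a where a: "a \<in> A" "x = g a" using Scases[OF xS] by blast
        show ?thesis
        proof (cases "y \<in> A")
          case yA: True
          have "\<not> y < g a" "y \<noteq> g a" using xy a by auto
          then have "\<not> y < f a" "y \<noteq> f a" using lt[OF yA a(1)] eq[OF yA a(1)] by auto
          then have "f a < y" by simp
          then show ?thesis using a yA hmA hmg by simp
        next
          case False
          then obtain b where b: "b \<in> A" "y = g b" using Scases[OF yS] by blast
          have "a < b" using xy a b Aut_less_iff[OF g] by simp
          then have "f a < f b" using Aut_less[OF f] by simp
          then show ?thesis using a b hmg by simp
        qed
      qed
    qed
    have finS: "finite S" unfolding S_def using finA by simp
    obtain w where w: "w \<in> Aut" "\<forall>x\<in>S. w x = hm x" using UH_ext[OF uh finS hmono] by blast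
    have wA: "w a = a" if "a \<in> A" for a using that w(2) hmA unfolding S_def by simp
    have wg: "w (g a) = f a" if "a \<in> A" for a using that w(2) hmg unfolding S_def by simp
    define u where "u = inv w"
    define v where "v = inv f \<circ> w \<circ> g"
    have uA: "u \<in> Aut" unfolding u_def by (rule Aut_inv[OF w(1)])
    have vA: "v \<in> Aut" unfolding v_def by (intro Aut_comp Aut_inv f w(1) g)
    have "u \<in> U"
    proof (rule stab[OF uA], intro ballI)
      fix a assume "a \<in> A"
      then show "u a = a" unfolding u_def using wA Aut_inv_f[OF w(1), of a] by simp
    qed
    moreover have "v \<in> U"
    proof (rule stab[OF vA], intro ballI)
      fix a assume "a \<in> A"
      then show "v a = a" unfolding v_def using wg Aut_inv_f[OF f, of a] by simp
    qed
    moreover have "g = u \<circ> f \<circ> v"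
    proof (rule ext)
      fix x
      show "g x = (u \<circ> f \<circ> v) x" unfolding u_def v_def using f w(1) by simp
    qed
    ultimately have "(f, g) \<in> E" using UE f g by blast
    then show "g \<in> (\<Union>f\<in>F. {y. (f, y) \<in> E})" using fF by blast
  qed
  ultimately show "\<exists>F. finite F \<and> F \<subseteq> Aut \<and> Aut \<subseteq> (\<Union>f\<in>F. {y. (f, y) \<in> E})" by blast
qed


theorem theorem3p3:
  assumes "simple_chain TYPE('a::linorder_topology)"
  shows "(rigid_chain TYPE('a) \<and> (\<exists>x y::'a. x \<noteq> y) \<longrightarrow>
            \<not> roelcke_precompact (Aut :: ('a \<Rightarrow> 'a) set) tau_p \<and>
            \<not> roelcke_precompact (Aut :: ('a \<Rightarrow> 'a) set) tau_partial)
       \<and> (ultrahomogeneous_chain TYPE('a) \<longrightarrow>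
            roelcke_precompact (Aut :: ('a \<Rightarrow> 'a) set) tau_partial \<and>
            roelcke_precompact (Aut :: ('a \<Rightarrow> 'a) set) tau_p)"
  using rigid_not_precompact precompact_partial_imp_p uh_precompact by blast

end
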